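(* Let $(X,\wedge,\vee,\bot,\top)$ be a bounded lattice which is not distributive. Then there exists a sequence $x=(x_1,x_2,x_3)$ of elements of $X$ such that the identity $$P_3(k)=P_{2}(k)\wedge\bigl(P_{2}(k-1)\vee x_3\bigr)$$ fails for some $k\in\{1,2,3\}$, where for $0\le m\le 3$ and $0\le k\le m+1$ $$P_m(k)=\begin{cases}\bot & k=0,\\ \bigwedge_{I\subseteq\{1,\ldots,m\},\ |I|=k}\ \bigvee_{i\in I} x_i & 1\le k\le m,\\ \top & k=m+1.\end{cases}$$
   Context: $\bot$ and $\top$ denote the least and greatest elements of $X$. For $1\le k\le m$, $P_m(k)$ is the $k$-th element of $(x_1,\ldots,x_m)$ sorted with respect to the lattice (meet over $k$-element index subsets of the join of the corresponding entries). *)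

theory Defs
  imports Main
begin

definition P :: "(nat \<Rightarrow> 'a::bounded_lattice) \<Rightarrow> nat \<Rightarrow> nat \<Rightarrow> 'a" where
  "P x m k = (if k = 0 then bot
     else if k \<le> m then
       Inf_fin ((\<lambda>I. Sup_fin (x ` I)) ` {I. I \<subseteq> {1..m} \<and> card I = k})
     else top)"

end

theory Submission
  imports Defs
begin

lemma S32: "{I. I \<subseteq> {1..3::nat} \<and> card I = 2} = {{1,2},{1,3},{2,3}}"
proof -
  have "{1..3::nat} = {1,2,3}" by auto
  hence "{I. I \<subseteq> {1..3::nat} \<and> card I = 2} = {I \<in> Pow {1,2,3}. card I = 2}" by auto
  also have "\<dots> = {{1,2},{1,3},{2,3}}" by (simp add: Pow_insert) (auto)
  finally show ?thesis .
qed
lemma S22: "{I. I \<subseteq> {1..2::nat} \<and> card I = 2} = {{1,2}}"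
proof -
  have "{1..2::nat} = {1,2}" by auto
  hence "{I. I \<subseteq> {1..2::nat} \<and> card I = 2} = {I \<in> Pow {1,2}. card I = 2}" by auto
  also have "\<dots> = {{1,2}}" by (simp add: Pow_insert) (auto)
  finally show ?thesis .
qed
lemma S21: "{I. I \<subseteq> {1..2::nat} \<and> card I = 1} = {{1},{2}}"
proof -
  have "{1..2::nat} = {1,2}" by auto
  hence "{I. I \<subseteq> {1..2::nat} \<and> card I = 1} = {I \<in> Pow {1,2}. card I = 1}" by auto
  also have "\<dots> = {{1},{2}}" by (simp add: Pow_insert) (auto)
  finally show ?thesis .
qed

lemma distr_from_E:
  fixes a b c :: "'a::bounded_lattice"
  assumes E: "\<And>a b c :: 'a. inf (inf (sup a b) (sup a c)) (sup b c) = inf (sup a b) (sup (inf a b) c)"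
  shows "inf a (sup b c) = sup (inf a b) (inf a c)"
proof -
  have modu: "\<And>u v w :: 'a. w \<le> u \<Longrightarrow> inf u (sup v w) = sup (inf u v) w"
  proof -
    fix u v w :: 'a assume "w \<le> u"
    have "inf (inf (sup u v) (sup u w)) (sup v w) = inf u (sup v w)"
      proof -
      have "sup u w = u" using \<open>w \<le> u\<close> by (simp add: sup.absorb1)
      hence "inf (sup u v) (sup u w) = u" by (metis inf.commute inf_sup_absorb)
      thus ?thesis by simp
    qed
    moreover have "inf (sup u v) (sup (inf u v) w) = sup (inf u v) w"
    proof -
      have "sup (inf u v) w \<le> sup u v" using \<open>w \<le> u\<close>
        by (meson inf_le1 le_supI le_supI1 order_trans)
      thus ?thesis by (simp add: inf.absorb2)
    qed
    ultimately show "inf u (sup v w) = sup (inf u v) w" using E[of u v w] by simp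
  qed
  define a' where "a' = inf a (sup b c)"
  have a'le: "a' \<le> sup b c" unfolding a'_def by simp
  have e1: "inf (inf (sup b c) (sup b a')) (sup c a') = inf (sup b c) (sup (inf b c) a')"
    using E[of b c a'] by simp
  have e2: "inf (inf (sup a' b) (sup a' c)) (sup b c) = inf (sup a' b) (sup (inf a' b) c)"
    using E[of a' b c] by simp
  have l1: "inf (sup b c) (sup (inf b c) a') = sup (inf b c) a'"
  proof -
    have "sup (inf b c) a' \<le> sup b c" using a'le by (meson inf_le1 le_supI le_supI1)
    thus ?thesis by (simp add: inf.absorb2)
  qed
  have eq: "inf (inf (sup b c) (sup b a')) (sup c a') = inf (inf (sup a' b) (sup a' c)) (sup b c)"
    by (simp add: ac_simps)
  have "sup (inf b c) a' = inf (sup a' b) (sup (inf a' b) c)"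
    using e1 e2 l1 eq by simp
  also have "\<dots> \<le> sup (inf a' b) c" by simp
  finally have "a' \<le> sup (inf a' b) c" by simp
  hence a1: "a' = inf a' (sup c (inf a' b))" by (simp add: inf.absorb1 sup.commute)
  have "inf a' (sup c (inf a' b)) = sup (inf a' c) (inf a' b)"
    by (rule modu) simp
  hence a2: "a' = sup (inf a' b) (inf a' c)" using a1 by (simp add: sup.commute)
  have "inf a' b = inf a b" unfolding a'_def
    by (metis inf.absorb2 inf.assoc inf.commute sup_ge1)
  moreover have "inf a' c = inf a c" unfolding a'_def
    by (metis inf.absorb2 inf.assoc inf.commute sup_ge2)
  ultimately show ?thesis using a2 a'_def by simp
qed

theorem proposition3p2:
  assumes "\<not> (\<forall>a b c :: 'a::bounded_lattice. inf a (sup b c) = sup (inf a b) (inf a c))"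
  shows "\<exists>x :: nat \<Rightarrow> 'a. \<exists>k \<in> {1..3}.
           P x 3 k \<noteq> inf (P x 2 k) (sup (P x 2 (k - 1)) (x 3))"
proof (rule ccontr)
  assume H: "\<not> ?thesis"
  have E: "inf (inf (sup a b) (sup a c)) (sup b c) = inf (sup a b) (sup (inf a b) c)" for a b c :: 'a
  proof -
    define x :: "nat \<Rightarrow> 'a" where "x = (\<lambda>i. if i = 1 then a else if i = 2 then b else c)"
    have h: "P x 3 2 = inf (P x 2 2) (sup (P x 2 1) (x 3))" using H by force
    have p1: "P x 3 2 = inf (inf (sup a b) (sup a c)) (sup b c)"
      unfolding P_def S32 by (simp add: x_def ac_simps)
    have p2: "P x 2 2 = sup a b"
      unfolding P_def S22 by (simp add: x_def sup.commute)
    have p3: "P x 2 1 = inf a b"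
      unfolding P_def S21 by (simp add: x_def)
    show ?thesis using h p1 p2 p3 by (simp add: x_def ac_simps)
  qed
  show False using assms distr_from_E[OF E] by blast
qed

end
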